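(* The set $\mathcal{M}^+(X)$ of fully-supported Borel probability measures on $X=A^{\mathbb{N}}$ is a complete metric space with respect to the projective distance \[ \rho(\mu,\nu)=\sup_{n\in\mathbb{N}}\max_{\pmb{a}\in A^n}\frac{1}{n}\left|\log\frac{\mu[\pmb{a}]}{\nu[\pmb{a}]}\right|. \]
   Context: $A$ is a finite alphabet and $X=A^{\mathbb{N}}$ carries the product (Tychonoff) topology and its Borel $\sigma$-algebra. For a word $\pmb{a}=a_1\cdots a_n\in A^n$, the cylinder set is $[\pmb{a}]=\{\pmb{x}\in X:\ x_1\cdots x_n=\pmb{a}\}$. $\mathcal{M}^+(X)$ denotes the set of Borel probability measures $\mu$ on $X$ with $\mu[\pmb{a}]>0$ for every finite word $\pmb{a}\in\bigcup_{n\in\mathbb{N}}A^n$.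
   Formalization: The projective distance $\rho$ takes values in [0, infinity] rather than in the reals, so $\mathcal{M}^+(X)$ is a complete extended metric space in which $\rho(\mu,\nu)$ may be infinite. The statement above fails without it. *)

theory Defs
  imports "HOL-Probability.Probability"
begin

text \<open>The shift space X = A^N over a finite alphabet, represented by the finite type 'a
  (so A = UNIV :: 'a set); sequences are indexed from 0, so x_1 ... x_n of the paper is
  x 0 ... x (n-1).\<close>

definition shift_topology :: "(nat \<Rightarrow> 'a::finite) topology" where
  "shift_topology = product_topology (\<lambda>_. discrete_topology (UNIV :: 'a set)) UNIV"

definition shift_borel :: "(nat \<Rightarrow> 'a::finite) measure" where
  "shift_borel = sigma (topspace shift_topology) {U. openin shift_topology U}"

definition cyl :: "'a list \<Rightarrow> (nat \<Rightarrow> 'a::finite) set" where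
  "cyl w = {x \<in> space shift_borel. \<forall>i<length w. x i = w ! i}"

definition Mplus :: "(nat \<Rightarrow> 'a::finite) measure set" where
  "Mplus = {\<mu>. prob_space \<mu> \<and> sets \<mu> = sets shift_borel \<and>
                 (\<forall>w::'a list. 0 < measure \<mu> (cyl w))}"

definition proj_dist :: "(nat \<Rightarrow> 'a::finite) measure \<Rightarrow> (nat \<Rightarrow> 'a) measure \<Rightarrow> ennreal" where
  "proj_dist \<mu> \<nu> =
     (SUP w \<in> {w::'a list. length w \<ge> 1}.
        ennreal (\<bar>ln (measure \<mu> (cyl w) / measure \<nu> (cyl w))\<bar> / real (length w)))"

definition is_metric_on :: "'b set \<Rightarrow> ('b \<Rightarrow> 'b \<Rightarrow> ennreal) \<Rightarrow> bool" where
  "is_metric_on S d \<longleftrightarrow>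
     (\<forall>x\<in>S. \<forall>y\<in>S. d x y = 0 \<longleftrightarrow> x = y) \<and>
     (\<forall>x\<in>S. \<forall>y\<in>S. d x y = d y x) \<and>
     (\<forall>x\<in>S. \<forall>y\<in>S. \<forall>z\<in>S. d x z \<le> d x y + d y z)"

definition is_complete_on :: "'b set \<Rightarrow> ('b \<Rightarrow> 'b \<Rightarrow> ennreal) \<Rightarrow> bool" where
  "is_complete_on S d \<longleftrightarrow>
     (\<forall>s::nat \<Rightarrow> 'b. range s \<subseteq> S \<longrightarrow>
        (\<forall>e>0. \<exists>N. \<forall>m\<ge>N. \<forall>k\<ge>N. d (s m) (s k) < e) \<longrightarrow>
        (\<exists>l\<in>S. \<forall>e>0. \<exists>N. \<forall>m\<ge>N. d (s m) l < e))"

end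

theory Submission
  imports Defs
begin
lemma topspace_shift: "topspace (shift_topology :: (nat \<Rightarrow> 'a::finite) topology) = UNIV"
  by (auto simp: shift_topology_def)

lemma space_shift_borel: "space (shift_borel :: (nat \<Rightarrow> 'a::finite) measure) = UNIV"
  unfolding shift_borel_def by (subst space_measure_of) (auto simp: topspace_shift dest: openin_subset)

lemma sets_shift_borel: "sets (shift_borel :: (nat \<Rightarrow> 'a::finite) measure) =
   sigma_sets UNIV {U. openin shift_topology U}"
  unfolding shift_borel_def by (subst sets_measure_of) (auto simp: topspace_shift dest: openin_subset)

lemma cyl_alt: "cyl w = {x. \<forall>i<length w. x i = w ! i}"
  by (simp add: cyl_def space_shift_borel)

lemma cyl_PiE: "cyl w = (\<Pi>\<^sub>E i\<in>UNIV. if i < length w then {w!i} else UNIV)"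
  by (auto simp: cyl_alt PiE_iff split: if_splits)

lemma cyl_open: "openin shift_topology (cyl w)"
  unfolding cyl_PiE shift_topology_def
  by (rule product_topology_basis) (auto intro: finite_subset[of _ "{..<length w}"])

lemma open_cyl_union:
  assumes "openin shift_topology (U :: (nat \<Rightarrow> 'a::finite) set)"
  shows "U = \<Union>(cyl ` {w. cyl w \<subseteq> U})"
proof (intro equalityI subsetI)
  fix x assume "x \<in> U"
  with assms obtain V where fin: "finite {i. V i \<noteq> (UNIV :: 'a set)}" and xV: "x \<in> Pi\<^sub>E UNIV V"
      and VU: "Pi\<^sub>E UNIV V \<subseteq> U"
    unfolding shift_topology_def openin_product_topology_alt by auto
  obtain n where n: "\<And>i. i \<in> {i. V i \<noteq> UNIV} \<Longrightarrow> i < n"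
    using finite_nat_bounded[OF fin] by auto
  define w where "w = map x [0..<n]"
  have "x \<in> cyl w" by (simp add: cyl_alt w_def)
  moreover have "cyl w \<subseteq> U"
  proof
    fix y assume y: "y \<in> cyl w"
    have "y \<in> Pi\<^sub>E UNIV V"
    proof (clarsimp simp: PiE_iff)
      fix i show "y i \<in> V i"
      proof (cases "V i = UNIV")
        case False
        then have "i < n" using n by auto
        then have "y i = x i" using y by (simp add: cyl_alt w_def)
        then show ?thesis using xV by (auto simp: PiE_iff)
      qed auto
    qed
    then show "y \<in> U" using VU by auto
  qed
  ultimately show "x \<in> \<Union>(cyl ` {w. cyl w \<subseteq> U})" by auto
qed auto

definition cylE :: "(nat \<Rightarrow> 'a::finite) set set" where
  "cylE = insert {} (range cyl)"

lemma sets_shift_borel_cyl: "sets (shift_borel :: (nat \<Rightarrow> 'a::finite) measure) = sigma_sets UNIV cylE"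
proof -
  interpret S: sigma_algebra "UNIV :: (nat \<Rightarrow> 'a) set" "sigma_sets UNIV cylE"
    by (rule sigma_algebra_sigma_sets) auto
  have "sigma_sets UNIV {U. openin shift_topology U} \<subseteq> sigma_sets (UNIV :: (nat \<Rightarrow> 'a) set) cylE"
  proof (rule S.sigma_sets_subset, safe)
    fix U :: "(nat \<Rightarrow> 'a) set" assume U: "openin shift_topology U"
    have "countable (cyl ` {w::'a list. cyl w \<subseteq> U})"
      by (rule countable_image) auto
    moreover have "cyl ` {w. cyl w \<subseteq> U} \<subseteq> sigma_sets UNIV cylE"
      by (auto simp: cylE_def)
    ultimately have "\<Union>(cyl ` {w. cyl w \<subseteq> U}) \<in> sigma_sets UNIV cylE"
      by (rule S.countable_Union)
    then show "U \<in> sigma_sets UNIV cylE" using open_cyl_union[OF U] by simp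
  qed
  moreover have "sigma_sets UNIV cylE \<subseteq> sigma_sets (UNIV :: (nat \<Rightarrow> 'a) set) {U. openin shift_topology U}"
    by (rule sigma_sets_mono) (auto simp: cylE_def cyl_open)
  ultimately show ?thesis unfolding sets_shift_borel by auto
qed

lemma Int_stable_cylE: "Int_stable (cylE :: (nat \<Rightarrow> 'a::finite) set set)"
proof (rule Int_stableI)
  fix A B :: "(nat \<Rightarrow> 'a) set" assume "A \<in> cylE" "B \<in> cylE"
  then show "A \<inter> B \<in> cylE"
  proof (cases "A \<inter> B = {}")
    case False
    from \<open>A \<in> cylE\<close> \<open>B \<in> cylE\<close> False obtain v w where vw: "A = cyl v" "B = cyl w"
      by (auto simp: cylE_def)
    from False obtain x where x: "x \<in> cyl v" "x \<in> cyl w" using vw by auto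
    define u where "u = map x [0..<max (length v) (length w)]"
    have "cyl v \<inter> cyl w = cyl u"
      using x by (auto simp: cyl_alt u_def less_max_iff_disj)
    then show ?thesis using vw by (auto simp: cylE_def)
  qed (auto simp: cylE_def)
qed

abbreviation SM :: "nat \<Rightarrow> 'a::finite measure" where "SM \<equiv> (\<lambda>_. count_space UNIV)"

lemma space_PiM_SM: "space (PiM UNIV (SM :: nat \<Rightarrow> 'a::finite measure)) = UNIV"
  by (simp add: space_PiM)

lemma cyl_in_PiM: "cyl w \<in> sets (PiM UNIV (SM :: nat \<Rightarrow> 'a::finite measure))"
proof -
  have "cyl w = {x \<in> space (PiM UNIV (SM :: nat \<Rightarrow> 'a::finite measure)). \<forall>i\<in>{..<length w}. x i = w ! i}"
    by (auto simp: cyl_alt space_PiM_SM)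
  also have "\<dots> \<in> sets (PiM UNIV (SM :: nat \<Rightarrow> 'a::finite measure))"
    by measurable
  finally show ?thesis .
qed

lemma sets_PiM_shift: "sets (PiM UNIV (SM :: nat \<Rightarrow> 'a::finite measure)) = sets shift_borel"
proof (rule antisym)
  show "sets (PiM UNIV (SM :: nat \<Rightarrow> 'a::finite measure)) \<subseteq> sets shift_borel"
    unfolding sets_PiM_single sets_shift_borel space_count_space PiE_UNIV
  proof (rule sigma_sets_mono', safe)
    fix i :: nat and A :: "'a set"
    have "{f \<in> \<Pi>\<^sub>E i\<in>UNIV. space (SM i). f i \<in> A} = (\<Pi>\<^sub>E j\<in>UNIV. if j = i then A else UNIV)"
      by (auto simp: PiE_iff split: if_splits)
    moreover have "openin shift_topology (\<Pi>\<^sub>E j\<in>UNIV. if j = i then A else UNIV)"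
      unfolding shift_topology_def
      by (rule product_topology_basis) (auto intro: finite_subset[of _ "{i}"])
    ultimately show "openin shift_topology {f \<in> UNIV. f i \<in> A}" by simp
  qed
  show "sets shift_borel \<subseteq> sets (PiM UNIV (SM :: nat \<Rightarrow> 'a::finite measure))"
    unfolding sets_shift_borel_cyl
    by (rule sets.sigma_sets_subset') (auto simp: cylE_def cyl_in_PiM space_PiM_SM intro: sets.top[of "PiM UNIV SM", unfolded space_PiM_SM])
qed

definition LW :: "(nat \<Rightarrow> 'a::finite) measure \<Rightarrow> 'a list \<Rightarrow> real" where
  "LW \<mu> w = ln (measure \<mu> (cyl w))"

lemma Mplus_D:
  assumes "\<mu> \<in> Mplus"
  shows "prob_space \<mu>" "sets \<mu> = sets shift_borel" "\<And>w. 0 < measure \<mu> (cyl w)"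
  using assms by (auto simp: Mplus_def)

lemma Mplus_space: "\<mu> \<in> Mplus \<Longrightarrow> space \<mu> = UNIV"
  using sets_eq_imp_space_eq[of \<mu> shift_borel] by (simp add: Mplus_def space_shift_borel)

lemma cyl_Nil: "cyl [] = UNIV" by (simp add: cyl_alt)

lemma Mplus_Nil: "\<mu> \<in> Mplus \<Longrightarrow> measure \<mu> (cyl []) = 1"
proof -
  assume m: "\<mu> \<in> Mplus"
  have "measure \<mu> (space \<mu>) = 1" using prob_space.prob_space[OF Mplus_D(1)[OF m]] .
  then show ?thesis using Mplus_space[OF m] by (simp add: cyl_Nil)
qed

lemma proj_dist_alt:
  assumes "\<mu> \<in> Mplus" "\<nu> \<in> Mplus"
  shows "proj_dist \<mu> \<nu> = (SUP w \<in> {w. length w \<ge> 1}. ennreal (\<bar>LW \<mu> w - LW \<nu> w\<bar> / real (length w)))"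
  unfolding proj_dist_def LW_def
proof (intro SUP_cong refl)
  fix w show "ennreal (\<bar>ln (measure \<mu> (cyl w) / measure \<nu> (cyl w))\<bar> / real (length w)) =
     ennreal (\<bar>ln (measure \<mu> (cyl w)) - ln (measure \<nu> (cyl w))\<bar> / real (length w))"
  using Mplus_D(3)[OF assms(1), of w] Mplus_D(3)[OF assms(2), of w] by (simp add: ln_div)
qed

lemma proj_dist_ge:
  assumes "\<mu> \<in> Mplus" "\<nu> \<in> Mplus" "length w \<ge> 1"
  shows "ennreal (\<bar>LW \<mu> w - LW \<nu> w\<bar> / real (length w)) \<le> proj_dist \<mu> \<nu>"
  unfolding proj_dist_alt[OF assms(1,2)] by (rule SUP_upper) (use assms in auto)

lemma Mplus_eqI:
  assumes "\<mu> \<in> Mplus" "\<nu> \<in> Mplus" "\<And>w. measure \<mu> (cyl w) = measure \<nu> (cyl w)"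
  shows "\<mu> = \<nu>"
proof (rule measure_eqI_generator_eq[where E=cylE and \<Omega>=UNIV and A="\<lambda>_. UNIV"])
  show "Int_stable cylE" by (rule Int_stable_cylE)
  show "cylE \<subseteq> Pow UNIV" by auto
  show "sets \<mu> = sigma_sets UNIV cylE" "sets \<nu> = sigma_sets UNIV cylE"
    using assms by (auto simp: Mplus_def sets_shift_borel_cyl)
  show "range (\<lambda>_. UNIV) \<subseteq> cylE" by (auto simp: cylE_def cyl_Nil[symmetric])
  show "(\<Union>i. UNIV) = UNIV" by simp
  show "emeasure \<mu> UNIV \<noteq> \<infinity>"
    using prob_space.emeasure_space_1[OF Mplus_D(1)[OF assms(1)]] Mplus_space[OF assms(1)] by simp
  fix X :: "(nat \<Rightarrow> 'a) set" assume "X \<in> cylE"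
  then show "emeasure \<mu> X = emeasure \<nu> X"
  proof (auto simp: cylE_def)
    fix w
    show "emeasure \<mu> (cyl w) = emeasure \<nu> (cyl w)"
      using assms(3)[of w] finite_measure.emeasure_eq_measure[OF prob_space.finite_measure[OF Mplus_D(1)[OF assms(1)]]]
        finite_measure.emeasure_eq_measure[OF prob_space.finite_measure[OF Mplus_D(1)[OF assms(2)]]] by simp
  qed
qed

lemma metric: "is_metric_on (Mplus :: (nat \<Rightarrow> 'a::finite) measure set) proj_dist"
  unfolding is_metric_on_def
proof (intro conjI ballI)
  fix x y :: "(nat \<Rightarrow> 'a) measure" assume x: "x \<in> Mplus" and y: "y \<in> Mplus"
  show "proj_dist x y = proj_dist y x"
    unfolding proj_dist_alt[OF x y] proj_dist_alt[OF y x] by (simp add: abs_minus_commute)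
  show "(proj_dist x y = 0) = (x = y)"
  proof
    assume "x = y" then show "proj_dist x y = 0"
      unfolding proj_dist_alt[OF x y] by (simp add: SUP_constant bot_ennreal)
  next
    assume 0: "proj_dist x y = 0"
    show "x = y"
    proof (rule Mplus_eqI[OF x y])
      fix w :: "'a list"
      show "measure x (cyl w) = measure y (cyl w)"
      proof (cases "length w \<ge> 1")
        case True
        have "ennreal (\<bar>LW x w - LW y w\<bar> / real (length w)) \<le> 0"
          using proj_dist_ge[OF x y True] 0 by simp
        then have "LW x w = LW y w \<or> w = []" by simp
        then have "LW x w = LW y w" using True by auto
        then show ?thesis
          using Mplus_D(3)[OF x, of w] Mplus_D(3)[OF y, of w] by (simp add: LW_def)
      next
        case False
        then have "w = []" by (cases w) auto
        then show ?thesis using Mplus_Nil[OF x] Mplus_Nil[OF y] by simp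
      qed
    qed
  qed
  fix z :: "(nat \<Rightarrow> 'a) measure" assume z: "z \<in> Mplus"
  show "proj_dist x z \<le> proj_dist x y + proj_dist y z"
    unfolding proj_dist_alt[OF x z]
  proof (rule SUP_least)
    fix w :: "'a list" assume w: "w \<in> {w. length w \<ge> 1}"
    have "\<bar>LW x w - LW z w\<bar> / real (length w) \<le>
          \<bar>LW x w - LW y w\<bar> / real (length w) + \<bar>LW y w - LW z w\<bar> / real (length w)"
      by (simp add: add_divide_distrib[symmetric] divide_right_mono)
    then have "ennreal (\<bar>LW x w - LW z w\<bar> / real (length w)) \<le>
          ennreal (\<bar>LW x w - LW y w\<bar> / real (length w)) + ennreal (\<bar>LW y w - LW z w\<bar> / real (length w))"
      by (simp add: ennreal_plus[symmetric] ennreal_leI del: ennreal_plus)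
    also have "\<dots> \<le> proj_dist x y + proj_dist y z"
      using w by (intro add_mono proj_dist_ge) (auto simp: x y z)
    finally show "ennreal (\<bar>LW x w - LW z w\<bar> / real (length w)) \<le> proj_dist x y + proj_dist y z" .
  qed
qed

lemma sets_PiM_fin: "sets (PiM {0..<n} (SM :: nat \<Rightarrow> 'a::finite measure)) = Pow (space (PiM {0..<n} (SM :: nat \<Rightarrow> 'a measure)))"
proof (intro equalityI subsetI)
  fix S assume "S \<in> sets (PiM {0..<n} (SM :: nat \<Rightarrow> 'a::finite measure))"
  then show "S \<in> Pow (space (PiM {0..<n} (SM :: nat \<Rightarrow> 'a measure)))"
    using sets.sets_into_space by blast
next
  fix S assume S: "S \<in> Pow (space (PiM {0..<n} (SM :: nat \<Rightarrow> 'a measure)))"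
  have sp: "space (PiM {0..<n} (SM :: nat \<Rightarrow> 'a measure)) = PiE {0..<n} (\<lambda>_. UNIV)"
    by (simp add: space_PiM)
  have "finite (PiE {0..<n} (\<lambda>_. UNIV :: 'a set))"
    by (rule finite_PiE) auto
  then have fin: "finite S"
    using S sp by (auto intro: finite_subset)
  have "(\<Union>x\<in>S. PiE {0..<n} (\<lambda>i. {x i})) \<in> sets (PiM {0..<n} (SM :: nat \<Rightarrow> 'a measure))"
    by (intro sets.finite_UN fin sets_PiM_I_finite) auto
  moreover have "(\<Union>x\<in>S. PiE {0..<n} (\<lambda>i. {x i})) = S"
  proof (intro equalityI subsetI)
    fix y assume "y \<in> (\<Union>x\<in>S. PiE {0..<n} (\<lambda>i. {x i}))"
    then obtain x where x: "x \<in> S" "y \<in> PiE {0..<n} (\<lambda>i. {x i})" by blast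
    then have xe: "x \<in> PiE {0..<n} (\<lambda>_. UNIV)" using S sp by blast
    have "y = x"
    proof
      fix i show "y i = x i"
      proof (cases "i < n")
        case True then show ?thesis using x(2) by (auto simp: PiE_iff)
      next
        case False
        then have "y i = undefined" "x i = undefined" using x(2) xe
          by (auto simp: PiE_def extensional_def)
        then show ?thesis by simp
      qed
    qed
    then show "y \<in> S" using x by simp
  next
    fix y assume y: "y \<in> S"
    then have "y \<in> PiE {0..<n} (\<lambda>_. UNIV)" using S sp by blast
    then have "y \<in> PiE {0..<n} (\<lambda>i. {y i})" by (auto simp: PiE_def)
    then show "y \<in> (\<Union>x\<in>S. PiE {0..<n} (\<lambda>i. {x i}))" using y by blast
  qed
  ultimately show "S \<in> sets (PiM {0..<n} (SM :: nat \<Rightarrow> 'a measure))" by simp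
qed

definition hist :: "nat \<Rightarrow> (nat \<Rightarrow> 'a) \<Rightarrow> 'a list" where
  "hist n x = map x [0..<n]"

locale consistent =
  fixes p :: "'a::finite list \<Rightarrow> real"
  assumes pos: "\<And>w. 0 < p w" and nil: "p [] = 1" and cons: "\<And>w. p w = (\<Sum>a\<in>UNIV. p (w @ [a]))"
begin

definition q :: "nat \<Rightarrow> (nat \<Rightarrow> 'a) \<Rightarrow> 'a \<Rightarrow> real" where
  "q n x a = p (hist n x @ [a]) / p (hist n x)"

lemma q_nonneg: "0 \<le> q n x a"
  using pos by (simp add: q_def less_imp_le)

lemma q_sum: "(\<integral>\<^sup>+a. ennreal (q n x a) \<partial>count_space UNIV) = 1"
proof -
  have "(\<integral>\<^sup>+a. ennreal (q n x a) \<partial>count_space UNIV) = (\<Sum>a\<in>UNIV. ennreal (q n x a))"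
    by (simp add: nn_integral_count_space_finite)
  also have "\<dots> = ennreal (\<Sum>a\<in>UNIV. q n x a)"
    by (simp add: q_nonneg)
  also have "(\<Sum>a\<in>UNIV. q n x a) = (\<Sum>a\<in>UNIV. p (hist n x @ [a])) / p (hist n x)"
    by (simp add: q_def sum_divide_distrib)
  also have "\<dots> = 1" using cons[of "hist n x"] pos[of "hist n x"] by simp
  finally show ?thesis by simp
qed

definition PP :: "nat \<Rightarrow> (nat \<Rightarrow> 'a) \<Rightarrow> 'a measure" where
  "PP n x = measure_pmf (embed_pmf (q n x))"

lemma emeasure_PP: "emeasure (PP n x) {a} = q n x a"
  unfolding PP_def emeasure_pmf_single
  by (subst pmf_embed_pmf) (auto simp: q_nonneg q_sum)

lemma prob_space_PP: "prob_space (PP n x)"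
  unfolding PP_def by (rule prob_space_measure_pmf)

lemma measurable_PP: "PP n \<in> measurable (PiM {0..<n} SM) (subprob_algebra (count_space UNIV))"
proof -
  have "PP n \<in> measurable (count_space (space (PiM {0..<n} (SM :: nat \<Rightarrow> 'a measure)))) (subprob_algebra (count_space UNIV))"
    unfolding measurable_count_space_eq1
    by (auto simp: space_subprob_algebra PP_def intro: prob_space_imp_subprob_space[OF prob_space_measure_pmf])
  moreover have "sets (PiM {0..<n} (SM :: nat \<Rightarrow> 'a measure)) = sets (count_space (space (PiM {0..<n} (SM :: nat \<Rightarrow> 'a measure))))"
    by (simp only: sets_PiM_fin sets_count_space)
  ultimately show ?thesis
    using measurable_cong_sets[OF _ refl] by metis
qed

sublocale IT: Ionescu_Tulcea PP SM
  unfolding Ionescu_Tulcea_def using measurable_PP prob_space_PP by blast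

definition H :: "nat \<Rightarrow> 'a list \<Rightarrow> (nat \<Rightarrow> 'a) set" where
  "H n w = {y \<in> space (PiM {0..<n} SM). hist n y = w}"

lemma H_sets: "H n w \<in> sets (PiM {0..<n} SM)"
  unfolding sets_PiM_fin H_def by auto

lemma hist_upd: "hist (Suc n) (y(n := x)) = hist n y @ [x]"
  unfolding hist_def by simp

lemma space_upd: "y \<in> space (PiM {0..<n} (SM :: nat \<Rightarrow> 'a measure)) \<Longrightarrow>
   y(n := x) \<in> space (PiM {0..<Suc n} (SM :: nat \<Rightarrow> 'a measure))"
  by (auto simp: space_PiM atLeast0_lessThan_Suc intro!: PiE_fun_upd)

lemma omega0: "(\<lambda>_. undefined) \<in> space (PiM {0..<0} (SM :: nat \<Rightarrow> 'a measure))"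
  by (simp add: space_PiM)

lemma C_H: "length w = n \<Longrightarrow> emeasure (IT.C 0 n (\<lambda>_. undefined)) (H n w) = ennreal (p w)"
proof (induction n arbitrary: w)
  case 0
  then have "w = []" by simp
  moreover have "(\<lambda>_. undefined) \<in> H 0 []"
    using omega0 by (simp add: H_def hist_def)
  ultimately show ?case using H_sets[of 0 "[]"] by (simp add: nil)
next
  case (Suc n)
  obtain v a where w: "w = v @ [a]" and v: "length v = n"
    using Suc.prems by (metis length_Suc_conv_rev)
  let ?C = "IT.C 0 n (\<lambda>_. undefined)"
  have sp: "space ?C = space (PiM {0..<n} SM)"
    using IT.space_C[OF omega0, of n] by simp
  have ne: "space ?C \<noteq> {}"
    using prob_space.not_empty[OF IT.prob_space_C[OF omega0, of n]] .
  have meas: "IT.eP n \<in> measurable ?C (subprob_algebra (PiM {0..<Suc n} SM))"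
  proof -
    have "sets ?C = sets (PiM {0..<n} SM)" using IT.sets_C[OF omega0, of n] by simp
    then show ?thesis
      by (subst measurable_cong_sets[OF _ refl]) (auto intro: IT.measurable_eP)
  qed
  have "emeasure (IT.C 0 (Suc n) (\<lambda>_. undefined)) (H (Suc n) w) =
        emeasure (?C \<bind> IT.eP n) (H (Suc n) w)"
    by simp
  also have "\<dots> = (\<integral>\<^sup>+y. emeasure (IT.eP n y) (H (Suc n) w) \<partial>?C)"
    by (rule emeasure_bind[OF ne meas H_sets])
  also have "\<dots> = (\<integral>\<^sup>+y. ennreal (p (v @ [a]) / p v) * indicator (H n v) y \<partial>?C)"
  proof (rule nn_integral_cong)
    fix y assume y: "y \<in> space ?C"
    then have y': "y \<in> space (PiM {0..<n} SM)" using sp by simp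
    have pre: "(\<lambda>x. y(n := x)) -` H (Suc n) w \<inter> space (SM n) = (if hist n y = v then {a} else {})"
      using space_upd[OF y'] by (auto simp: H_def hist_upd w)
    have "emeasure (IT.eP n y) (H (Suc n) w) = emeasure (PP n y) ((\<lambda>x. y(n := x)) -` H (Suc n) w \<inter> space (SM n))"
      by (rule IT.emeasure_eP[OF y' H_sets])
    also have "\<dots> = ennreal (p (v @ [a]) / p v) * indicator (H n v) y"
      unfolding pre using y' by (auto simp: emeasure_PP q_def H_def)
    finally show "emeasure (IT.eP n y) (H (Suc n) w) = ennreal (p (v @ [a]) / p v) * indicator (H n v) y" .
  qed
  also have "\<dots> = ennreal (p (v @ [a]) / p v) * emeasure ?C (H n v)"
    by (rule nn_integral_cmult_indicator) (simp add: IT.sets_C[OF omega0] H_sets)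
  also have "\<dots> = ennreal (p (v @ [a]) / p v) * ennreal (p v)"
    using Suc.IH[OF v] by simp
  also have "\<dots> = ennreal (p w)"
    using pos[of v] pos[of w] by (simp add: ennreal_mult[symmetric] w less_imp_le)
  finally show ?case .
qed

end

context consistent begin
lemma emb_H: "prod_emb UNIV SM {0..<length w} (H (length w) w) = cyl w"
proof -
  have "\<And>x. restrict x {0..<length w} \<in> space (PiM {0..<length w} (SM :: nat \<Rightarrow> 'a measure))"
    by (simp add: space_PiM)
  moreover have h2: "\<And>x. hist (length w) (restrict x {0..<length w}) = map x [0..<length w]"
    by (simp add: hist_def)
  moreover have h3: "\<And>x :: nat \<Rightarrow> 'a. (map x [0..<length w] = w) = (\<forall>i<length w. x i = w ! i)"
    by (subst list_eq_iff_nth_eq) simp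
  ultimately show ?thesis
    unfolding prod_emb_def H_def cyl_alt space_count_space PiE_UNIV by (simp add: h2 h3)
qed

lemma lim_cyl: "emeasure IT.PF.lim (cyl w) = ennreal (p w)"
proof -
  let ?n = "length w"
  have "emeasure IT.PF.lim (cyl w) = emeasure IT.PF.lim (IT.PF.emb UNIV {0..<?n} (H ?n w))"
    by (simp add: emb_H)
  also have "\<dots> = emeasure (IT.CI {0..<?n}) (H ?n w)"
    by (rule IT.lim) (auto simp: H_sets)
  also have "\<dots> = emeasure (IT.C 0 ?n (\<lambda>_. undefined)) (IT.PF.emb {0..<?n} {0..<?n} (H ?n w))"
    by (rule IT.emeasure_CI) (auto simp: H_sets)
  also have "IT.PF.emb {0..<?n} {0..<?n} (H ?n w) = H ?n w"
    by (rule prod_emb_id) (auto simp: H_def space_PiM)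
  also have "emeasure (IT.C 0 ?n (\<lambda>_. undefined)) (H ?n w) = ennreal (p w)"
    by (rule C_H) simp
  finally show ?thesis .
qed

lemma lim_Mplus: "IT.PF.lim \<in> Mplus" and lim_measure: "measure IT.PF.lim (cyl w) = p w"
proof -
  show m: "measure IT.PF.lim (cyl w) = p w" for w
    using pos[of w] by (simp add: measure_def lim_cyl less_imp_le)
  have sets: "sets IT.PF.lim = sets shift_borel"
    by (simp add: sets_PiM_shift)
  have "space IT.PF.lim = cyl []"
    by (simp add: space_PiM cyl_Nil)
  then have "prob_space IT.PF.lim"
    by (intro prob_spaceI) (simp add: lim_cyl nil)
  then show "IT.PF.lim \<in> Mplus"
    using sets m pos by (simp add: Mplus_def)
qed

end

lemma cyl_split: "cyl w = (\<Union>a\<in>UNIV. cyl (w @ [a]))"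
proof (intro equalityI subsetI)
  fix x assume "x \<in> cyl w"
  then have "x \<in> cyl (w @ [x (length w)])"
    by (auto simp: cyl_alt nth_append less_Suc_eq)
  then show "x \<in> (\<Union>a\<in>UNIV. cyl (w @ [a]))" by blast
qed (auto simp: cyl_alt nth_append)

lemma cyl_disj: "disjoint_family_on (\<lambda>a. cyl (w @ [a])) UNIV"
  unfolding disjoint_family_on_def
proof (intro ballI impI)
  fix a b :: 'a assume "a \<noteq> b"
  show "cyl (w @ [a]) \<inter> cyl (w @ [b]) = {}"
  proof (rule ccontr)
    assume "cyl (w @ [a]) \<inter> cyl (w @ [b]) \<noteq> {}"
    then obtain x where "x \<in> cyl (w @ [a])" "x \<in> cyl (w @ [b])" by blast
    then have "x (length w) = a" "x (length w) = b"
      by (auto simp: cyl_alt dest!: spec[of _ "length w"])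
    then show False using \<open>a \<noteq> b\<close> by simp
  qed
qed

lemma Mplus_cons:
  assumes "\<mu> \<in> Mplus"
  shows "measure \<mu> (cyl w) = (\<Sum>a\<in>UNIV. measure \<mu> (cyl (w @ [a :: 'a::finite])))"
proof -
  have sets: "cyl v \<in> sets \<mu>" for v :: "'a list"
    using Mplus_D(2)[OF assms] by (simp add: sets_shift_borel_cyl cylE_def)
  have "measure \<mu> (cyl w) = measure \<mu> (\<Union>a\<in>UNIV. cyl (w @ [a]))"
    using cyl_split[of w] by simp
  also have "\<dots> = (\<Sum>a\<in>UNIV. measure \<mu> (cyl (w @ [a])))"
    by (rule measure_finite_Union)
       (auto simp: sets cyl_disj finite_measure.emeasure_finite[OF prob_space.finite_measure[OF Mplus_D(1)[OF assms]]])
  finally show ?thesis .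
qed

lemma complete: "is_complete_on (Mplus :: (nat \<Rightarrow> 'a::finite) measure set) proj_dist"
  unfolding is_complete_on_def
proof (intro allI impI)
  fix s :: "nat \<Rightarrow> (nat \<Rightarrow> 'a) measure"
  assume rng: "range s \<subseteq> Mplus" and cau: "\<forall>e>0. \<exists>N. \<forall>m\<ge>N. \<forall>k\<ge>N. proj_dist (s m) (s k) < e"
  have sM: "s m \<in> Mplus" for m using rng by auto
  have LWnil: "LW (s m) [] = 0" for m using Mplus_Nil[OF sM] by (simp add: LW_def)
  have bound: "\<exists>N. \<forall>m\<ge>N. \<forall>k\<ge>N. \<forall>w. \<bar>LW (s m) w - LW (s k) w\<bar> \<le> e * real (length w)"
    if e: "e > 0" for e :: real
  proof -
    have "ennreal e > 0" using e by simp
    then obtain N where N: "\<forall>m\<ge>N. \<forall>k\<ge>N. proj_dist (s m) (s k) < ennreal e" using cau by blast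
    show ?thesis
    proof (intro exI allI impI)
      fix m k :: nat and w :: "'a list" assume m: "m \<ge> N" and k: "k \<ge> N"
      show "\<bar>LW (s m) w - LW (s k) w\<bar> \<le> e * real (length w)"
      proof (cases "length w \<ge> 1")
        case True
        have "ennreal (\<bar>LW (s m) w - LW (s k) w\<bar> / real (length w)) < ennreal e"
          using proj_dist_ge[OF sM sM True, of m k] N m k by (meson le_less_trans)
        then have "\<bar>LW (s m) w - LW (s k) w\<bar> / real (length w) < e"
          by (simp add: ennreal_less_iff)
        moreover have "real (length w) > 0" using True by (cases w) auto
        ultimately have "\<bar>LW (s m) w - LW (s k) w\<bar> < e * real (length w)"
          by (simp add: pos_divide_less_eq)
        then show ?thesis by simp
      next
        case False
        then have "w = []" by (cases w) auto
        then show ?thesis by (simp add: LWnil)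
      qed
    qed
  qed
  have conv: "convergent (\<lambda>m. LW (s m) w)" for w
    unfolding Cauchy_convergent_iff[symmetric] Cauchy_def dist_real_def
  proof (intro allI impI)
    fix e :: real assume e: "e > 0"
    have e': "e / (real (length w) + 1) > 0" using e by simp
    obtain N where N: "\<And>m k. m \<ge> N \<Longrightarrow> k \<ge> N \<Longrightarrow>
        \<bar>LW (s m) w - LW (s k) w\<bar> \<le> e / (real (length w) + 1) * real (length w)"
      using bound[OF e'] by blast
    have lt: "e / (real (length w) + 1) * real (length w) < e"
      using e by (simp add: field_simps)
    show "\<exists>M. \<forall>m\<ge>M. \<forall>n\<ge>M. \<bar>LW (s m) w - LW (s n) w\<bar> < e"
    proof (intro exI allI impI)
      fix m n assume "m \<ge> N" "n \<ge> N"
      from N[OF this] lt show "\<bar>LW (s m) w - LW (s n) w\<bar> < e" by linarith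
    qed
  qed
  define lam where "lam w = lim (\<lambda>m. LW (s m) w)" for w
  have lamL: "(\<lambda>m. LW (s m) w) \<longlonglongrightarrow> lam w" for w
    using conv[of w] by (simp add: lam_def convergent_LIMSEQ_iff)
  define p where "p w = exp (lam w)" for w
  have meas_exp: "measure (s m) (cyl w) = exp (LW (s m) w)" for m w
    using Mplus_D(3)[OF sM, of m w] by (simp add: LW_def)
  have ptend: "(\<lambda>m. measure (s m) (cyl w)) \<longlonglongrightarrow> p w" for w
    unfolding meas_exp p_def by (rule tendsto_exp[OF lamL])
  have "consistent p"
  proof
    show "0 < p w" for w by (simp add: p_def)
    have "lam [] = 0"
      using LIMSEQ_unique[OF lamL[of "[]"], of 0] by (simp add: LWnil)
    then show "p [] = 1" by (simp add: p_def)
    fix w :: "'a list"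
    have "(\<lambda>m. \<Sum>a\<in>UNIV. measure (s m) (cyl (w @ [a]))) \<longlonglongrightarrow> (\<Sum>a\<in>UNIV. p (w @ [a]))"
      by (intro tendsto_sum ptend)
    then have "(\<lambda>m. measure (s m) (cyl w)) \<longlonglongrightarrow> (\<Sum>a\<in>UNIV. p (w @ [a]))"
      by (simp add: Mplus_cons[OF sM, symmetric])
    then show "p w = (\<Sum>a\<in>UNIV. p (w @ [a]))"
      using LIMSEQ_unique[OF ptend[of w]] by blast
  qed
  then interpret consistent p .
  have LWl: "LW IT.PF.lim w = lam w" for w by (simp add: LW_def lim_measure p_def)
  have key: "\<exists>N. \<forall>m\<ge>N. proj_dist (s m) IT.PF.lim \<le> ennreal e" if e: "e > 0" for e :: real
  proof -
    obtain N where N: "\<forall>m\<ge>N. \<forall>k\<ge>N. \<forall>w. \<bar>LW (s m) w - LW (s k) w\<bar> \<le> e * real (length w)"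
      using bound[OF e] by blast
    show ?thesis
    proof (intro exI allI impI)
      fix m assume m: "m \<ge> N"
      show "proj_dist (s m) IT.PF.lim \<le> ennreal e"
        unfolding proj_dist_alt[OF sM lim_Mplus]
      proof (rule SUP_least)
        fix w :: "'a list" assume w: "w \<in> {w. length w \<ge> 1}"
        have "(\<lambda>k. \<bar>LW (s m) w - LW (s k) w\<bar>) \<longlonglongrightarrow> \<bar>LW (s m) w - lam w\<bar>"
          by (intro tendsto_rabs tendsto_diff tendsto_const lamL)
        then have "\<bar>LW (s m) w - lam w\<bar> \<le> e * real (length w)"
          by (rule LIMSEQ_le_const2) (use N m in blast)
        then have "\<bar>LW (s m) w - LW IT.PF.lim w\<bar> / real (length w) \<le> e"
          using w e by (simp add: LWl divide_le_eq mult.commute)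
        then show "ennreal (\<bar>LW (s m) w - LW IT.PF.lim w\<bar> / real (length w)) \<le> ennreal e"
          by (rule ennreal_leI)
      qed
    qed
  qed
  show "\<exists>l\<in>Mplus. \<forall>e>0. \<exists>N. \<forall>m\<ge>N. proj_dist (s m) l < e"
  proof (intro bexI[OF _ lim_Mplus] allI impI)
    fix e :: ennreal assume e: "e > 0"
    obtain r :: real where r: "r > 0" "ennreal r < e"
    proof (cases e)
      case (real r0)
      then show ?thesis using e that[of "r0 / 2"] by (simp add: ennreal_less_iff)
    next
      case top
      then show ?thesis using that[of 1] by simp
    qed
    obtain N where "\<forall>m\<ge>N. proj_dist (s m) IT.PF.lim \<le> ennreal r" using key[OF r(1)] by blast
    then show "\<exists>N. \<forall>m\<ge>N. proj_dist (s m) IT.PF.lim < e"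
      using r(2) by (meson le_less_trans)
  qed
qed

theorem theorem2p1:
  shows "is_metric_on (Mplus :: (nat \<Rightarrow> 'a::finite) measure set) proj_dist \<and>
         is_complete_on (Mplus :: (nat \<Rightarrow> 'a::finite) measure set) proj_dist"
  using metric complete by blast

end
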